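(* Let $E=(C,V)$ be an approval election such that $0<|A(u)|=|A(v)|<|C|$ for all $u,v\in V$. Then $\mathrm{pair\text{-}agr}(E)=\mathrm{pcc\text{-}agr}(E)$.
   Context: An (approval) election is a pair $E=(C,V)$ with candidate set $C=\{c_1,\dots,c_m\}$ and a collection of voters $V$; each vote is a binary vector in $\{0,1\}^m$, and $A(v)$ is the set of candidates approved by $v$. $\mathrm{ham}(u,v)=\sum_j|u[j]-v[j]|$. $\mathrm{satr}(E)=\frac{1}{|V||C|}\sum_{v\in V}|A(v)|$. $\mathrm{pair\text{-}agr}(E)=1-\frac{\sum_{u\in V}\sum_{v\in V}\mathrm{ham}(u,v)}{2|V|^2|C|\,\mathrm{satr}(E)(1-\mathrm{satr}(E))}$. Pearson correlation $\mathrm{pcc}(x,y)=\frac{\sum_i(x[i]-\overline{x})(y[i]-\overline{y})}{\sqrt{\sum_i(x[i]-\overline{x})^2}\sqrt{\sum_i(y[i]-\overline{y})^2}}$ (set to $1$ if $x$ or $y$ is constant), and $\mathrm{pcc\text{-}agr}(E)=\frac{1}{|V|^2}\sum_{u\in V}\sum_{v\in V}\mathrm{pcc}(u,v)$; sums are over all ordered pairs including $u=v$. *)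

theory Defs
  imports Complex_Main
begin

text \<open>Candidates are c_0,...,c_{m-1} (indices 0..<m).
  The voter collection V is a list of votes (duplicates allowed).\<close>

definition is_vote :: "nat \<Rightarrow> (nat \<Rightarrow> real) \<Rightarrow> bool" where
  "is_vote m v \<longleftrightarrow> (\<forall>j<m. v j = 0 \<or> v j = 1)"

definition approved :: "nat \<Rightarrow> (nat \<Rightarrow> real) \<Rightarrow> nat set" where
  "approved m v = {j. j < m \<and> v j = 1}"

definition ham :: "nat \<Rightarrow> (nat \<Rightarrow> real) \<Rightarrow> (nat \<Rightarrow> real) \<Rightarrow> real" where
  "ham m u v = (\<Sum>j<m. \<bar>u j - v j\<bar>)"

definition satr :: "nat \<Rightarrow> (nat \<Rightarrow> real) list \<Rightarrow> real" where
  "satr m V = (\<Sum>v\<leftarrow>V. real (card (approved m v))) / (real (length V) * real m)"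

definition pair_agr :: "nat \<Rightarrow> (nat \<Rightarrow> real) list \<Rightarrow> real" where
  "pair_agr m V = 1 - (\<Sum>u\<leftarrow>V. \<Sum>v\<leftarrow>V. ham m u v) /
     (2 * real (length V) ^ 2 * real m * satr m V * (1 - satr m V))"

definition mean :: "nat \<Rightarrow> (nat \<Rightarrow> real) \<Rightarrow> real" where
  "mean m x = (\<Sum>i<m. x i) / real m"

definition is_constant :: "nat \<Rightarrow> (nat \<Rightarrow> real) \<Rightarrow> bool" where
  "is_constant m x \<longleftrightarrow> (\<forall>i<m. \<forall>j<m. x i = x j)"

definition pcc :: "nat \<Rightarrow> (nat \<Rightarrow> real) \<Rightarrow> (nat \<Rightarrow> real) \<Rightarrow> real" where
  "pcc m x y = (if is_constant m x \<or> is_constant m y then 1 else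
     (\<Sum>i<m. (x i - mean m x) * (y i - mean m y)) /
     (sqrt (\<Sum>i<m. (x i - mean m x)^2) * sqrt (\<Sum>i<m. (y i - mean m y)^2)))"

definition pcc_agr :: "nat \<Rightarrow> (nat \<Rightarrow> real) list \<Rightarrow> real" where
  "pcc_agr m V = (\<Sum>u\<leftarrow>V. \<Sum>v\<leftarrow>V. pcc m u v) / real (length V) ^ 2"

end

theory Submission
  imports Defs
begin

lemma vote01: "is_vote m v \<Longrightarrow> j < m \<Longrightarrow> v j = 0 \<or> v j = 1"
  by (simp add: is_vote_def)

lemma sum_vote:
  assumes "is_vote m v"
  shows "(\<Sum>j<m. v j) = real (card (approved m v))"
proof -
  have "(\<Sum>j<m. v j) = (\<Sum>j<m. if v j = 1 then 1 else 0)"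
    by (rule sum.cong) (use vote01[OF assms] in auto)
  also have "\<dots> = (\<Sum>j\<in>{j\<in>{..<m}. v j = 1}. 1)"
    by (subst sum.inter_filter) auto
  also have "{j\<in>{..<m}. v j = 1} = approved m v" unfolding approved_def by auto
  finally show ?thesis by simp
qed

lemma sq_vote: "is_vote m v \<Longrightarrow> j < m \<Longrightarrow> (v j)^2 = v j"
  using vote01 by fastforce

lemma nonconst:
  assumes "is_vote m v" "0 < card (approved m v)" "card (approved m v) < m"
  shows "\<not> is_constant m v"
proof
  assume c: "is_constant m v"
  from assms(2) obtain a where a: "a \<in> approved m v"
    by (metis card.empty ex_in_conv less_irrefl)
  have "approved m v \<noteq> {..<m}"
  proof
    assume "approved m v = {..<m}"
    then have "card (approved m v) = m" by simp
    with assms(3) show False by simp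
  qed
  moreover have "approved m v \<subseteq> {..<m}" unfolding approved_def by auto
  ultimately obtain b where b: "b < m" "b \<notin> approved m v" by auto
  have "a < m" "v a = 1" using a unfolding approved_def by auto
  moreover have "v b \<noteq> 1" using b unfolding approved_def by auto
  moreover have "v a = v b" using c b(1) \<open>a < m\<close> unfolding is_constant_def by blast
  ultimately show False by simp
qed

lemma sum_list_div: "(\<Sum>x\<leftarrow>xs. f x / (c::real)) = (\<Sum>x\<leftarrow>xs. f x) / c"
  by (induction xs) (auto simp: add_divide_distrib)

lemma aux: "(d::real) \<noteq> 0 \<Longrightarrow> (d - x) / d = 1 - x / d"
  by (simp add: diff_divide_distrib)

lemma pcc_formula:
  assumes u: "is_vote m u" and v: "is_vote m v"
    and ku: "card (approved m u) = k" and kv: "card (approved m v) = k"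
    and k0: "0 < k" and km: "k < m"
  shows "pcc m u v = 1 - ham m u v / (2 * (real k - real k ^ 2 / real m))"
proof -
  define p where "p = real k / real m"
  have m0: "real m > 0" using km by simp
  have mu: "mean m u = p" unfolding mean_def p_def using sum_vote[OF u] ku by simp
  have mv: "mean m v = p" unfolding mean_def p_def using sum_vote[OF v] kv by simp
  define S where "S = (\<Sum>i<m. u i * v i)"
  have cov: "(\<Sum>i<m. (u i - p) * (v i - p)) = S - p * k - p * k + real m * p^2"
  proof -
    have "(\<Sum>i<m. (u i - p) * (v i - p)) = (\<Sum>i<m. u i * v i - p * u i - p * v i + p^2)"
      by (rule sum.cong) (auto simp: algebra_simps power2_eq_square)
    also have "\<dots> = S - p * (\<Sum>i<m. u i) - p * (\<Sum>i<m. v i) + real m * p^2"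
      by (simp add: S_def sum.distrib sum_subtractf sum_distrib_left)
    finally show ?thesis using sum_vote[OF u] sum_vote[OF v] ku kv by simp
  qed
  have var: "(\<Sum>i<m. (w i - p)^2) = real k - real k ^ 2 / real m"
    if w: "is_vote m w" "card (approved m w) = k" for w
  proof -
    have "(\<Sum>i<m. (w i - p)^2) = (\<Sum>i<m. w i - 2 * p * w i + p^2)"
      by (rule sum.cong) (use sq_vote[OF w(1)] in \<open>auto simp: power2_diff\<close>)
    also have "\<dots> = (\<Sum>i<m. w i) - 2 * p * (\<Sum>i<m. w i) + real m * p^2"
      by (simp add: sum.distrib sum_subtractf sum_distrib_left)
    finally show ?thesis using sum_vote[OF w(1)] w(2) m0 unfolding p_def
      by (simp add: field_simps power2_eq_square)
  qed
  have hamS: "ham m u v = 2 * real k - 2 * S"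
  proof -
    have "ham m u v = (\<Sum>i<m. u i + v i - 2 * (u i * v i))"
      unfolding ham_def
      by (rule sum.cong) (use vote01[OF u] vote01[OF v] in fastforce)+
    also have "\<dots> = (\<Sum>i<m. u i) + (\<Sum>i<m. v i) - 2 * S"
      by (simp add: S_def sum.distrib sum_subtractf sum_distrib_left)
    finally show ?thesis using sum_vote[OF u] sum_vote[OF v] ku kv by simp
  qed
  have D: "real k - real k ^ 2 / real m > 0"
  proof -
    have "real k ^ 2 / real m < real k" using k0 km m0
      by (simp add: divide_less_eq power2_eq_square)
    then show ?thesis by simp
  qed
  have nu: "\<not> is_constant m u" using nonconst[OF u] ku k0 km by simp
  have nv: "\<not> is_constant m v" using nonconst[OF v] kv k0 km by simp
  have "pcc m u v = (S - p * k - p * k + real m * p^2) / (real k - real k ^ 2 / real m)"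
    unfolding pcc_def using nu nv mu mv cov var[OF u ku] var[OF v kv] D
    by (simp add: real_sqrt_mult[symmetric])
  also have "\<dots> = ((real k - real k ^ 2 / real m) - (real k - S)) / (real k - real k ^ 2 / real m)"
    using m0 unfolding p_def by (simp add: power2_eq_square)
  also have "\<dots> = 1 - (real k - S) / (real k - real k ^ 2 / real m)"
    using D by (intro aux) simp
  also have "\<dots> = 1 - ham m u v / (2 * (real k - real k ^ 2 / real m))"
    unfolding hamS by (simp only: right_diff_distrib[symmetric] mult_divide_mult_cancel_left_if) simp

  finally show ?thesis .
qed

theorem proposition6:
  fixes m :: nat and V :: "(nat \<Rightarrow> real) list"
  assumes "V \<noteq> []"
    and "\<forall>v\<in>set V. is_vote m v"
    and "\<forall>u\<in>set V. \<forall>v\<in>set V.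
           0 < card (approved m u) \<and> card (approved m u) = card (approved m v)
           \<and> card (approved m v) < m"
  shows "pair_agr m V = pcc_agr m V"
proof -
  define k where "k = card (approved m (hd V))"
  have hd: "hd V \<in> set V" using assms(1) by simp
  have kall: "\<And>v. v \<in> set V \<Longrightarrow> card (approved m v) = k"
    using assms(3) hd unfolding k_def by metis
  have hh: "0 < card (approved m (hd V)) \<and> card (approved m (hd V)) < m"
    using assms(3) hd by blast
  have k0: "0 < k" and km: "k < m" using hh unfolding k_def by auto
  define n where "n = real (length V)"
  have n0: "n > 0" using assms(1) unfolding n_def by simp
  have m0: "real m > 0" using km by simp
  define D where "D = real k - real k ^ 2 / real m"
  have D: "D > 0"
  proof -
    have "real k ^ 2 / real m < real k" using k0 km m0
      by (simp add: divide_less_eq power2_eq_square)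
    then show ?thesis unfolding D_def by simp
  qed
  have sat: "satr m V = real k / real m"
  proof -
    have "(\<Sum>v\<leftarrow>V. real (card (approved m v))) = (\<Sum>v\<leftarrow>V. real k)"
      by (rule arg_cong[where f=sum_list], rule map_cong) (auto simp: kall)
    then show ?thesis unfolding satr_def using n0 m0
      by (simp add: sum_list_triv n_def)
  qed
  define H where "H = (\<Sum>u\<leftarrow>V. \<Sum>v\<leftarrow>V. ham m u v)"
  have "(\<Sum>u\<leftarrow>V. \<Sum>v\<leftarrow>V. pcc m u v) = (\<Sum>u\<leftarrow>V. \<Sum>v\<leftarrow>V. 1 - ham m u v * (1 / (2 * D)))"
    apply (rule arg_cong[where f=sum_list], rule map_cong, rule refl)
    apply (rule arg_cong[where f=sum_list], rule map_cong, rule refl)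
    using pcc_formula assms(2) kall k0 km unfolding D_def by simp
  also have "\<dots> = n * n - H * (1 / (2 * D))"
    by (simp add: sum_list_subtractf sum_list_triv sum_list_div H_def n_def)
  finally have pc: "pcc_agr m V = (n * n - H / (2 * D)) / n^2"
    unfolding pcc_agr_def n_def by simp
  have "2 * n ^ 2 * real m * satr m V * (1 - satr m V) = 2 * n^2 * D"
  proof -
    have e: "real m * (real k / real m) = real k" using m0 by simp
    have "real m * (real k / real m) * (1 - real k / real m) = D"
      unfolding e D_def by (simp add: right_diff_distrib power2_eq_square)
    then show ?thesis unfolding sat by (simp only: mult.assoc)
  qed
  then have pa: "pair_agr m V = 1 - H / (2 * n^2 * D)"
    unfolding pair_agr_def H_def n_def by simp
  have "(n * n - H / (2 * D)) / n^2 = n * n / n^2 - H / (2 * D) / n^2"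
    by (rule diff_divide_distrib)
  also have "n * n / n^2 = 1" using n0 by (simp add: power2_eq_square)
  also have "H / (2 * D) / n^2 = H / (2 * n^2 * D)"
    by (simp add: divide_divide_eq_left mult.commute mult.left_commute)
  finally show ?thesis unfolding pa pc by simp
qed

end
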